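(* Let $m\ge 1$ and $k\in\mathbb N_0$, and let $\mathbf{P}_k(\underline x)$ be an $\mathbb R_{0,m}$-valued homogeneous polynomial of degree $k$ in $\underline x\in\mathbb R^m$ which is monogenic in $\mathbb R^m$, i.e. $\partial_{\underline x}\mathbf{P}_k(\underline x)=0$. Define $\beta_k(0)=1$ and, for $n\ge1$, \[\beta_k(n)=\begin{cases} n, & n \text{ even},\\ 2k+m+n-1, & n\text{ odd},\end{cases}\] and for $0\le j\le n$ put $C_{k,n}(j)=\dfrac{(n-j)!}{\prod_{s=0}^{n-j}\beta_k(s)}$. For $n\ge0$ and $x=(x_0,\underline x)\in\mathbb R^{m+1}$ define \[\mathsf{M}_n^k(x)=\left(\sum_{j=0}^n\binom{n}{j}C_{k,n}(j)\,x_0^j\,\underline x^{\,n-j}\right)\mathbf{P}_k(\underline x).\] Then $\mathsf{M}_0^k(x)=\mathbf{P}_k(\underline x)$, each $\mathsf{M}_n^k$ is an $\mathbb R_{0,m}$-valued polynomial which is monogenic in $\mathbb R^{m+1}$ (i.e. $\partial_x\mathsf{M}_n^k=0$ on $\mathbb R^{m+1}$), and the sequence satisfies the Appell condition \[\tfrac12\,\overline\partial_x\mathsf{M}_n^k(x)=n\,\mathsf{M}_{n-1}^k(x),\qquad n\ge1.\]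
   Context: $\mathbb R_{0,m}$ is the real Clifford algebra generated by an orthonormal basis $e_1,\dots,e_m$ of $\mathbb R^m$ with relations $e_j^2=-1$ and $e_je_k+e_ke_j=0$ for $j\ne k$. A point $x=(x_0,x_1,\dots,x_m)\in\mathbb R^{m+1}$ is identified with the paravector $x_0+\underline x$, where $\underline x=\sum_{j=1}^m x_je_j$; powers $\underline x^{\,n}$ are taken in $\mathbb R_{0,m}$. The Dirac operator is $\partial_{\underline x}=\sum_{j=1}^m e_j\partial_{x_j}$, the generalized Cauchy–Riemann operator is $\partial_x=\partial_{x_0}+\partial_{\underline x}$, and its conjugate is $\overline\partial_x=\partial_{x_0}-\partial_{\underline x}$. A continuously differentiable $\mathbb R_{0,m}$-valued function $f$ is (left) monogenic in an open set of $\mathbb R^{m+1}$ if $\partial_x f=0$ there (operators act from the left), and a function on an open subset of $\mathbb R^m$ is monogenic if $\partial_{\underline x}f=0$. *)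

theory Defs
  imports "HOL-Analysis.Analysis"
begin

text \<open>The index type 'm::{finite,linorder} (finite, linearly ordered)
  plays the role of {1..m}, so m = CARD('m::{finite,linorder}) \<ge> 1.  An element of R_{0,m} is
  a real coefficient function on blades e_A, A a subset of the index type.\<close>

type_synonym 'm cl = "'m::{finite,linorder} set \<Rightarrow> real"

definition blade_sign :: "'m::{finite,linorder} set \<Rightarrow> 'm::{finite,linorder} set \<Rightarrow> real" where
  "blade_sign A B =
     (-1) ^ (card {(a, b). a \<in> A \<and> b \<in> B \<and> b < a} + card (A \<inter> B))"

definition clmul :: "'m::{finite,linorder} cl \<Rightarrow> 'm::{finite,linorder} cl \<Rightarrow> 'm::{finite,linorder} cl" where
  "clmul f g = (\<lambda>C. \<Sum>A\<in>UNIV. \<Sum>B\<in>UNIV.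
      if (A - B) \<union> (B - A) = C then blade_sign A B * f A * g B else 0)"

definition clone :: "'m::{finite,linorder} cl" where
  "clone = (\<lambda>A. if A = {} then 1 else 0)"

definition clbasis :: "'m::{finite,linorder} \<Rightarrow> 'm::{finite,linorder} cl" where
  "clbasis j = (\<lambda>A. if A = {j} then 1 else 0)"

definition clvec :: "real ^ 'm::{finite,linorder} \<Rightarrow> 'm::{finite,linorder} cl" where
  "clvec x = (\<lambda>A. \<Sum>j\<in>UNIV. if A = {j} then x $ j else 0)"

primrec clpow :: "'m::{finite,linorder} cl \<Rightarrow> nat \<Rightarrow> 'm::{finite,linorder} cl" where
  "clpow f 0 = clone"
| "clpow f (Suc n) = clmul f (clpow f n)"

definition cl_C1 :: "('a::euclidean_space \<Rightarrow> 'm::{finite,linorder} cl) \<Rightarrow> bool" where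
  "cl_C1 F \<longleftrightarrow> (\<forall>A. (\<forall>p. (\<lambda>y. F y A) differentiable at p) \<and>
      (\<forall>v. continuous_on UNIV (\<lambda>p. frechet_derivative (\<lambda>y. F y A) (at p) v)))"

definition clpartial :: "('a::euclidean_space \<Rightarrow> 'm::{finite,linorder} cl) \<Rightarrow> 'a \<Rightarrow> 'a \<Rightarrow> 'm::{finite,linorder} cl" where
  "clpartial F v p = (\<lambda>A. frechet_derivative (\<lambda>y. F y A) (at p) v)"

definition dirac :: "(real ^ 'm::{finite,linorder} \<Rightarrow> 'm::{finite,linorder} cl) \<Rightarrow> real ^ 'm::{finite,linorder} \<Rightarrow> 'm::{finite,linorder} cl" where
  "dirac F x = (\<lambda>A. \<Sum>j\<in>UNIV. clmul (clbasis j) (clpartial F (axis j 1) x) A)"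

text \<open>Points of R^{m+1} are pairs (x0, x) with x in R^m.\<close>
definition dirac_part :: "(real \<times> (real ^ 'm::{finite,linorder}) \<Rightarrow> 'm::{finite,linorder} cl) \<Rightarrow> real \<times> (real ^ 'm::{finite,linorder}) \<Rightarrow> 'm::{finite,linorder} cl" where
  "dirac_part F p = (\<lambda>A. \<Sum>j\<in>UNIV. clmul (clbasis j) (clpartial F (0, axis j 1) p) A)"

definition cauchy_riemann :: "(real \<times> (real ^ 'm::{finite,linorder}) \<Rightarrow> 'm::{finite,linorder} cl) \<Rightarrow> real \<times> (real ^ 'm::{finite,linorder}) \<Rightarrow> 'm::{finite,linorder} cl" where
  "cauchy_riemann F p = (\<lambda>A. clpartial F (1, 0) p A + dirac_part F p A)"

definition conj_cauchy_riemann :: "(real \<times> (real ^ 'm::{finite,linorder}) \<Rightarrow> 'm::{finite,linorder} cl) \<Rightarrow> real \<times> (real ^ 'm::{finite,linorder}) \<Rightarrow> 'm::{finite,linorder} cl" where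
  "conj_cauchy_riemann F p = (\<lambda>A. clpartial F (1, 0) p A - dirac_part F p A)"

definition monogenic_Rm :: "(real ^ 'm::{finite,linorder} \<Rightarrow> 'm::{finite,linorder} cl) \<Rightarrow> bool" where
  "monogenic_Rm F \<longleftrightarrow> cl_C1 F \<and> (\<forall>x. dirac F x = (\<lambda>A. 0))"

definition monogenic_Rm1 :: "(real \<times> (real ^ 'm::{finite,linorder}) \<Rightarrow> 'm::{finite,linorder} cl) \<Rightarrow> bool" where
  "monogenic_Rm1 F \<longleftrightarrow> cl_C1 F \<and> (\<forall>p. cauchy_riemann F p = (\<lambda>A. 0))"

definition cl_homogeneous_poly :: "nat \<Rightarrow> (real ^ 'm::{finite,linorder} \<Rightarrow> 'm::{finite,linorder} cl) \<Rightarrow> bool" where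
  "cl_homogeneous_poly k P \<longleftrightarrow> (\<exists>c :: ('m::{finite,linorder} \<Rightarrow> nat) \<Rightarrow> 'm::{finite,linorder} cl.
     \<forall>x. P x = (\<lambda>A. \<Sum>\<alpha>\<in>{\<alpha>. sum \<alpha> UNIV = k}. c \<alpha> A * (\<Prod>i\<in>UNIV. (x $ i) ^ \<alpha> i)))"

definition beta :: "nat \<Rightarrow> nat \<Rightarrow> nat \<Rightarrow> real" where
  "beta m k n = (if n = 0 then 1 else if even n then real n
                 else real (2 * k + m + n - 1))"

definition Ccoef :: "nat \<Rightarrow> nat \<Rightarrow> nat \<Rightarrow> nat \<Rightarrow> real" where
  "Ccoef m k n j = fact (n - j) / (\<Prod>s\<in>{0..n - j}. beta m k s)"

definition Mpoly :: "nat \<Rightarrow> (real ^ 'm::{finite,linorder} \<Rightarrow> 'm::{finite,linorder} cl) \<Rightarrow> nat \<Rightarrow> real \<times> (real ^ 'm::{finite,linorder}) \<Rightarrow> 'm::{finite,linorder} cl" where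
  "Mpoly k P n p = clmul
     (\<lambda>A. \<Sum>j\<in>{0..n}. real (n choose j) * Ccoef CARD('m::{finite,linorder}) k n j * (fst p) ^ j
            * clpow (clvec (snd p)) (n - j) A)
     (P (snd p))"

end

theory Submission
  imports Defs
begin


definition sd :: "'a set \<Rightarrow> 'a set \<Rightarrow> 'a set" where
  "sd A B = (A - B) \<union> (B - A)"

definition sg :: "bool \<Rightarrow> real" where "sg P = (if P then -1 else 1)"

lemma sg_xor_and: "sg ((P \<noteq> Q) \<and> R) = sg (P \<and> R) * sg (Q \<and> R)"
  by (auto simp: sg_def)

lemma sg_and_xor: "sg (R \<and> (P \<noteq> Q)) = sg (R \<and> P) * sg (R \<and> Q)"
  by (auto simp: sg_def)

lemma pow_card_prod:
  assumes "finite U" "S \<subseteq> U"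
  shows "(-1::real) ^ card S = (\<Prod>x\<in>U. sg (x \<in> S))"
proof -
  have "(\<Prod>x\<in>U. sg (x \<in> S)) = (\<Prod>x\<in>U. if x \<in> S then -1 else 1)"
    by (simp add: sg_def)
  also have "\<dots> = (\<Prod>x\<in>U \<inter> {x. x \<in> S}. -1) * (\<Prod>x\<in>U \<inter> - {x. x \<in> S}. 1)"
    using assms by (simp add: prod.If_cases)
  also have "U \<inter> {x. x \<in> S} = S" using assms by auto
  finally show ?thesis by simp
qed

definition EE :: "'m::{finite,linorder} set \<Rightarrow> 'm set \<Rightarrow> real" where
  "EE A B = (\<Prod>(a,b)\<in>UNIV. sg (a \<in> A \<and> b \<in> B \<and> b < a))"

definition II :: "'m::{finite,linorder} set \<Rightarrow> 'm set \<Rightarrow> real" where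
  "II A B = (\<Prod>c\<in>UNIV. sg (c \<in> A \<and> c \<in> B))"

lemma blade_sign_EI: "blade_sign A B = EE A B * II A B"
proof -
  have 1: "(-1::real) ^ card {(a, b). a \<in> A \<and> b \<in> B \<and> b < a} = EE A B"
    unfolding EE_def
    by (subst pow_card_prod[of UNIV]) (auto simp: case_prod_beta intro!: prod.cong)
  have 2: "(-1::real) ^ card (A \<inter> B) = II A B"
    unfolding II_def by (subst pow_card_prod[of UNIV]) auto
  show ?thesis unfolding blade_sign_def power_add 1 2 ..
qed

lemma mem_sd: "(x \<in> sd A B) = ((x \<in> A) \<noteq> (x \<in> B))"
  by (auto simp: sd_def)

lemma EE_sd_left: "EE (sd A B) C = EE A C * EE B C"
proof -
  have "\<And>a b. sg (((a \<in> A) \<noteq> (a \<in> B)) \<and> b \<in> C \<and> b < a) = sg (a \<in> A \<and> b \<in> C \<and> b < a) * sg (a \<in> B \<and> b \<in> C \<and> b < a)"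
    by (auto simp: sg_def)
  then show ?thesis unfolding EE_def mem_sd
    by (simp add: case_prod_beta prod.distrib)
qed

lemma EE_sd_right: "EE A (sd B C) = EE A B * EE A C"
proof -
  have "\<And>a b. sg (a \<in> A \<and> ((b \<in> B) \<noteq> (b \<in> C)) \<and> b < a) = sg (a \<in> A \<and> b \<in> B \<and> b < a) * sg (a \<in> A \<and> b \<in> C \<and> b < a)"
    by (auto simp: sg_def)
  then show ?thesis unfolding EE_def mem_sd
    by (simp add: case_prod_beta prod.distrib)
qed

lemma II_sd_left: "II (sd A B) C = II A C * II B C"
proof -
  have "\<And>c. sg (((c \<in> A) \<noteq> (c \<in> B)) \<and> c \<in> C) = sg (c \<in> A \<and> c \<in> C) * sg (c \<in> B \<and> c \<in> C)"
    by (auto simp: sg_def)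
  then show ?thesis unfolding II_def mem_sd by (simp add: prod.distrib)
qed

lemma II_sd_right: "II A (sd B C) = II A B * II A C"
proof -
  have "\<And>c. sg (c \<in> A \<and> ((c \<in> B) \<noteq> (c \<in> C))) = sg (c \<in> A \<and> c \<in> B) * sg (c \<in> A \<and> c \<in> C)"
    by (auto simp: sg_def)
  then show ?thesis unfolding II_def mem_sd by (simp add: prod.distrib)
qed

lemma cocycle: "blade_sign A B * blade_sign (sd A B) E = blade_sign A (sd B E) * blade_sign B E"
  unfolding blade_sign_EI EE_sd_left EE_sd_right II_sd_left II_sd_right
  by (simp add: mult_ac)

lemma sd_eq_iff: "(sd A B = C) = (B = sd A C)"
  by (auto simp: sd_def)

lemma sd_sd: "sd A (sd A B) = B" by (auto simp: sd_def)

lemma clmul_alt: "clmul f g C = (\<Sum>A\<in>UNIV. blade_sign A (sd A C) * f A * g (sd A C))"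
proof -
  have "clmul f g C = (\<Sum>A\<in>UNIV. \<Sum>B\<in>UNIV. if B = sd A C then blade_sign A B * f A * g B else 0)"
    unfolding clmul_def sd_def[symmetric] sd_eq_iff ..
  also have "\<dots> = (\<Sum>A\<in>UNIV. blade_sign A (sd A C) * f A * g (sd A C))"
    by (simp add: sum.delta)
  finally show ?thesis .
qed

lemma sum_sd_reindex: "(\<Sum>D\<in>(UNIV::'a::finite set set). h D) = (\<Sum>B\<in>UNIV. h (sd A B))"
  by (rule sum.reindex_bij_witness[of _ "sd A" "sd A"]) (auto simp: sd_sd)

lemma clmul_assoc: "clmul (clmul f g) h = clmul f (clmul g h)"
proof (rule ext)
  fix C :: "'a::{finite,linorder} set"
  have "clmul (clmul f g) h C = (\<Sum>D\<in>UNIV. \<Sum>A\<in>UNIV. blade_sign D (sd D C) * (blade_sign A (sd A D) * f A * g (sd A D)) * h (sd D C))"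
    unfolding clmul_alt[of "clmul f g"] clmul_alt[of f g]
    by (simp add: sum_distrib_left sum_distrib_right)
  also have "\<dots> = (\<Sum>A\<in>UNIV. \<Sum>D\<in>UNIV. blade_sign D (sd D C) * (blade_sign A (sd A D) * f A * g (sd A D)) * h (sd D C))"
    by (rule sum.swap)
  also have "\<dots> = (\<Sum>A\<in>UNIV. \<Sum>B\<in>UNIV. blade_sign (sd A B) (sd (sd A B) C) * (blade_sign A B * f A * g B) * h (sd (sd A B) C))"
  proof (rule sum.cong[OF refl])
    fix A :: "'a set"
    show "(\<Sum>D\<in>UNIV. blade_sign D (sd D C) * (blade_sign A (sd A D) * f A * g (sd A D)) * h (sd D C)) =
      (\<Sum>B\<in>UNIV. blade_sign (sd A B) (sd (sd A B) C) * (blade_sign A B * f A * g B) * h (sd (sd A B) C))"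
      by (subst sum_sd_reindex[where A=A]) (simp add: sd_sd)
  qed
  also have "\<dots> = (\<Sum>A\<in>UNIV. \<Sum>B\<in>UNIV. blade_sign A (sd A C) * f A * (blade_sign B (sd B (sd A C)) * g B * h (sd B (sd A C))))"
  proof (intro sum.cong refl)
    fix A B :: "'a set"
    have e: "sd (sd A B) C = sd B (sd A C)" by (auto simp: sd_def)
    have e2: "sd B (sd B (sd A C)) = sd A C" by (rule sd_sd)
    have "blade_sign A B * blade_sign (sd A B) (sd B (sd A C)) = blade_sign A (sd A C) * blade_sign B (sd B (sd A C))"
      using cocycle[of A B "sd B (sd A C)"] e2 by simp
    then show "blade_sign (sd A B) (sd (sd A B) C) * (blade_sign A B * f A * g B) * h (sd (sd A B) C) =
         blade_sign A (sd A C) * f A * (blade_sign B (sd B (sd A C)) * g B * h (sd B (sd A C)))"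
      unfolding e by (simp only: mult_ac)
  qed
  also have "\<dots> = clmul f (clmul g h) C"
    unfolding clmul_alt[of f "clmul g h"] clmul_alt[of g h] sum_distrib_left
    by (rule sum.cong[OF refl], rule sum.cong[OF refl]) (simp only: mult.assoc)
  finally show "clmul (clmul f g) h C = clmul f (clmul g h) C" .
qed



lemma blade_sign_empty_left [simp]: "blade_sign {} B = 1"
  by (simp add: blade_sign_def)
lemma blade_sign_empty_right [simp]: "blade_sign A {} = 1"
  by (simp add: blade_sign_def)

lemma sd_empty_left [simp]: "sd {} C = C" and sd_empty_iff: "(sd A C = {}) = (A = C)"
  by (auto simp: sd_def)

lemma clmul_clone_left [simp]: "clmul clone f = f"
proof
  fix C show "clmul clone f C = f C"
    unfolding clmul_alt clone_def by (simp add: if_distrib if_distribR sum.delta cong: if_cong)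
qed

lemma clmul_clone_right [simp]: "clmul f clone = f"
proof
  fix C
  have "clmul f clone C = (\<Sum>A\<in>UNIV. if A = C then blade_sign A (sd A C) * f A else 0)"
    unfolding clmul_alt clone_def sd_empty_iff by (intro sum.cong) auto
  also have "\<dots> = f C" by (simp add: sum.delta' sd_def)
  finally show "clmul f clone C = f C" .
qed

lemma clmul_add_left: "clmul (\<lambda>A. f A + g A) h C = clmul f h C + clmul g h C"
  unfolding clmul_alt by (simp add: algebra_simps sum.distrib)
lemma clmul_add_right: "clmul h (\<lambda>A. f A + g A) C = clmul h f C + clmul h g C"
  unfolding clmul_alt by (simp add: algebra_simps sum.distrib)
lemma clmul_diff_left: "clmul (\<lambda>A. f A - g A) h C = clmul f h C - clmul g h C"
  unfolding clmul_alt by (simp add: algebra_simps sum_subtractf)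
lemma clmul_diff_right: "clmul h (\<lambda>A. f A - g A) C = clmul h f C - clmul h g C"
  unfolding clmul_alt by (simp add: algebra_simps sum_subtractf)
lemma clmul_scale_left: "clmul (\<lambda>A. c * f A) h C = c * clmul f h C"
  unfolding clmul_alt by (simp add: algebra_simps sum_distrib_left)
lemma clmul_scale_right: "clmul h (\<lambda>A. c * f A) C = c * clmul h f C"
  unfolding clmul_alt by (simp add: algebra_simps sum_distrib_left)
lemma clmul_uminus_left: "clmul (\<lambda>A. - f A) h C = - clmul f h C"
  unfolding clmul_alt by (simp add: algebra_simps sum_negf)
lemma clmul_uminus_right: "clmul h (\<lambda>A. - f A) C = - clmul h f C"
  unfolding clmul_alt by (simp add: algebra_simps sum_negf)
lemma clmul_zero_left: "clmul (\<lambda>A. 0) h C = 0"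
  unfolding clmul_alt by simp
lemma clmul_zero_right: "clmul h (\<lambda>A. 0) C = 0"
  unfolding clmul_alt by simp

lemma clmul_sum_left: "clmul (\<lambda>A. \<Sum>j\<in>J. f j A) h C = (\<Sum>j\<in>J. clmul (f j) h C)"
proof (cases "finite J")
  case True then show ?thesis
    by (induction J rule: finite_induct) (simp_all add: clmul_zero_left clmul_add_left)
qed (simp add: clmul_zero_left)

lemma clmul_sum_right: "clmul h (\<lambda>A. \<Sum>j\<in>J. f j A) C = (\<Sum>j\<in>J. clmul h (f j) C)"
proof (cases "finite J")
  case True then show ?thesis
    by (induction J rule: finite_induct) (simp_all add: clmul_zero_right clmul_add_right)
qed (simp add: clmul_zero_right)

lemma clmul_basis_basis:
  "clmul (clbasis i) (clbasis j) C = (if C = sd {i} {j} then blade_sign {i} {j} else 0)"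
proof -
  have "clmul (clbasis i) (clbasis j) C = (\<Sum>A\<in>UNIV. if A = {i} then blade_sign A (sd A C) * clbasis j (sd A C) else 0)"
    unfolding clmul_alt clbasis_def by (intro sum.cong) auto
  also have "\<dots> = blade_sign {i} (sd {i} C) * clbasis j (sd {i} C)"
    by (simp add: sum.delta')
  also have "\<dots> = (if C = sd {i} {j} then blade_sign {i} {j} else 0)"
    unfolding clbasis_def by (auto simp: sd_def)
  finally show ?thesis .
qed

lemma blade_sign_ii: "blade_sign {i} {i} = -1"
proof -
  have e: "{(a, b). a \<in> {i} \<and> b \<in> {i} \<and> b < a} = {}" by auto
  show ?thesis unfolding blade_sign_def e by simp
qed

lemma blade_sign_lt: "i < j \<Longrightarrow> blade_sign {i} {j} = 1"
proof -
  assume "i < j"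
  then have e: "{(a, b). a \<in> {i} \<and> b \<in> {j} \<and> b < a} = {}" by auto
  have e2: "{i} \<inter> {j} = {}" using \<open>i<j\<close> by auto
  show ?thesis unfolding blade_sign_def e e2 by simp
qed

lemma blade_sign_gt: "i < j \<Longrightarrow> blade_sign {j} {i} = -1"
proof -
  assume "i < j"
  then have e: "{(a, b). a \<in> {j} \<and> b \<in> {i} \<and> b < a} = {(j,i)}" by auto
  have e2: "{j} \<inter> {i} = {}" using \<open>i<j\<close> by auto
  show ?thesis unfolding blade_sign_def e e2 by simp
qed

lemma blade_sign_anti: "i \<noteq> j \<Longrightarrow> blade_sign {i} {j} + blade_sign {j} {i} = 0"
proof -
  assume "i \<noteq> j"
  then consider "i < j" | "j < i" by (meson neqE)
  then show ?thesis
  proof cases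
    case 1 then show ?thesis using blade_sign_lt[of i j] blade_sign_gt[of i j] by simp
  next
    case 2 then show ?thesis using blade_sign_lt[of j i] blade_sign_gt[of j i] by simp
  qed
qed

lemma clmul_basis_sq: "clmul (clbasis i) (clbasis i) C = - clone C"
  by (simp add: clmul_basis_basis blade_sign_ii clone_def sd_def)

lemma clmul_basis_anti: "i \<noteq> j \<Longrightarrow> clmul (clbasis i) (clbasis j) C + clmul (clbasis j) (clbasis i) C = 0"
proof -
  assume ij: "i \<noteq> j"
  have "sd {j} {i} = sd {i} {j}" by (auto simp: sd_def)
  then show ?thesis using blade_sign_anti[OF ij]
    by (simp add: clmul_basis_basis)
qed

lemma clvec_basis: "clvec x = (\<lambda>A. \<Sum>j\<in>UNIV. x $ j * clbasis j A)"
  unfolding clvec_def clbasis_def by (intro ext sum.cong) auto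

lemma clmul_basis_vec_anti:
  "clmul (clbasis i) (clvec x) C + clmul (clvec x) (clbasis i) C = - 2 * x $ i * clone C"
proof -
  have "clmul (clbasis i) (clvec x) C + clmul (clvec x) (clbasis i) C
      = (\<Sum>j\<in>UNIV. x $ j * (clmul (clbasis i) (clbasis j) C + clmul (clbasis j) (clbasis i) C))"
    unfolding clvec_basis clmul_sum_left clmul_sum_right clmul_scale_left clmul_scale_right
    by (simp add: sum.distrib algebra_simps)
  also have "\<dots> = (\<Sum>j\<in>UNIV. if j = i then x $ i * (- 2 * clone C) else 0)"
    by (intro sum.cong refl) (auto simp: clmul_basis_anti clmul_basis_sq)
  also have "\<dots> = - 2 * x $ i * clone C" by (simp add: sum.delta')
  finally show ?thesis .
qed



lemma rpf_deriv:
  fixes f :: "'a::real_normed_vector \<Rightarrow> real"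
  assumes "real_polynomial_function f"
  shows "\<exists>f'. (\<forall>v. real_polynomial_function (\<lambda>p. f' p v)) \<and> (\<forall>p. (f has_derivative f' p) (at p))"
  using assms
proof (induction f)
  case (linear f)
  then show ?case
    by (rule_tac x="\<lambda>p. f" in exI) (auto intro: bounded_linear_imp_has_derivative)
next
  case (const c)
  then show ?case by (rule_tac x="\<lambda>p v. 0" in exI) auto
next
  case (add f g)
  then obtain f' g' where "\<forall>v. real_polynomial_function (\<lambda>p. f' p v)" "\<forall>p. (f has_derivative f' p) (at p)"
    "\<forall>v. real_polynomial_function (\<lambda>p. g' p v)" "\<forall>p. (g has_derivative g' p) (at p)" by blast
  then show ?case
    by (rule_tac x="\<lambda>p v. f' p v + g' p v" in exI) (auto intro: has_derivative_add)
next
  case (mult f g)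
  then obtain f' g' where "\<forall>v. real_polynomial_function (\<lambda>p. f' p v)" "\<forall>p. (f has_derivative f' p) (at p)"
    "\<forall>v. real_polynomial_function (\<lambda>p. g' p v)" "\<forall>p. (g has_derivative g' p) (at p)" by blast
  then show ?case using mult.hyps
    by (rule_tac x="\<lambda>p v. f p * g' p v + f' p v * g p" in exI)
       (auto intro!: has_derivative_mult real_polynomial_function.intros(3) real_polynomial_function.intros(4))
qed

definition cl_poly :: "('a::real_normed_vector \<Rightarrow> 'm::{finite,linorder} cl) \<Rightarrow> bool" where
  "cl_poly F \<longleftrightarrow> (\<forall>A. real_polynomial_function (\<lambda>p. F p A))"

lemma cl_poly_C1:
  fixes F :: "'a::euclidean_space \<Rightarrow> 'm::{finite,linorder} cl"
  assumes "cl_poly F" shows "cl_C1 F"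
  unfolding cl_C1_def
proof (rule allI, rule conjI)
  fix A
  obtain f' where f': "\<forall>v. real_polynomial_function (\<lambda>p. f' p v)" "\<forall>p. ((\<lambda>y. F y A) has_derivative f' p) (at p)"
    using rpf_deriv assms unfolding cl_poly_def by blast
  show "\<forall>p. (\<lambda>y. F y A) differentiable at p" using f' unfolding differentiable_def by blast
  show "\<forall>v. continuous_on UNIV (\<lambda>p. frechet_derivative (\<lambda>y. F y A) (at p) v)"
  proof
    fix v
    have eq: "(\<lambda>p. frechet_derivative (\<lambda>y. F y A) (at p) v) = (\<lambda>p. f' p v)"
      using f'(2) frechet_derivative_at by metis
    have "continuous_on UNIV (\<lambda>p. f' p v)"
      using f'(1) continuous_real_polymonial_function continuous_at_imp_continuous_on by blast
    then show "continuous_on UNIV (\<lambda>p. frechet_derivative (\<lambda>y. F y A) (at p) v)" unfolding eq .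
  qed
qed

lemma cl_poly_hasd:
  fixes F :: "'a::real_normed_vector \<Rightarrow> 'm::{finite,linorder} cl"
  assumes "cl_poly F"
  shows "((\<lambda>y. F y A) has_derivative frechet_derivative (\<lambda>y. F y A) (at p)) (at p)"
proof -
  obtain f' where f': "\<forall>p. ((\<lambda>y. F y A) has_derivative f' p) (at p)"
    using rpf_deriv assms unfolding cl_poly_def by blast
  then show ?thesis using frechet_derivative_at by metis
qed

lemma line_deriv:
  fixes F :: "'a::euclidean_space \<Rightarrow> 'm::{finite,linorder} cl"
  assumes "cl_poly F"
  shows "((\<lambda>t. F (p + t *\<^sub>R v) A) has_real_derivative clpartial F v p A) (at 0)"
proof -
  let ?L = "frechet_derivative (\<lambda>y. F y A) (at p)"
  have d: "((\<lambda>y. F y A) has_derivative ?L) (at p)" by (rule cl_poly_hasd[OF assms])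
  have bl: "bounded_linear ?L" using d has_derivative_bounded_linear by blast
  have l: "((\<lambda>t. p + t *\<^sub>R v) has_derivative (\<lambda>h. h *\<^sub>R v)) (at 0)"
    by (auto intro!: derivative_eq_intros)
  have "((\<lambda>t. F (p + t *\<^sub>R v) A) has_derivative (\<lambda>h. ?L (h *\<^sub>R v))) (at 0)"
    using has_derivative_compose[OF l, of "\<lambda>y. F y A" ?L] d by simp
  moreover have "(\<lambda>h. ?L (h *\<^sub>R v)) = (\<lambda>h. h * ?L v)"
    using bl by (simp add: linear_simps)
  ultimately have "((\<lambda>t. F (p + t *\<^sub>R v) A) has_derivative (\<lambda>h. h * ?L v)) (at 0)" by simp
  then show ?thesis
    unfolding has_field_derivative_def clpartial_def by (simp add: mult_commute_abs)
qed

lemma clpartial_eq: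
  fixes F :: "'a::euclidean_space \<Rightarrow> 'm::{finite,linorder} cl"
  assumes "cl_poly F" "\<And>A. ((\<lambda>t. F (p + t *\<^sub>R v) A) has_real_derivative D A) (at 0)"
  shows "clpartial F v p = D"
proof
  fix A show "clpartial F v p A = D A"
    using DERIV_unique[OF line_deriv[OF assms(1)] assms(2)] .
qed

lemma clpartial_lin:
  fixes F :: "real ^ 'n::finite \<Rightarrow> 'm::{finite,linorder} cl"
  assumes "cl_poly F"
  shows "(\<Sum>i\<in>UNIV. x $ i * clpartial F (axis i 1) p A) = clpartial F x p A"
proof -
  let ?L = "frechet_derivative (\<lambda>y. F y A) (at p)"
  have bl: "linear ?L" using cl_poly_hasd[OF assms] has_derivative_linear by blast
  have "?L x = ?L (\<Sum>i\<in>UNIV. x $ i *\<^sub>R axis i 1)"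
    using basis_expansion[of x] by (simp add: scalar_mult_eq_scaleR)
  also have "\<dots> = (\<Sum>i\<in>UNIV. x $ i * ?L (axis i 1))"
    using bl by (simp add: linear_sum linear_scale)
  finally show ?thesis unfolding clpartial_def by simp
qed

lemma euler:
  fixes F :: "'a::euclidean_space \<Rightarrow> 'm::{finite,linorder} cl"
  assumes "cl_poly F" "\<And>s y. F (s *\<^sub>R y) = (\<lambda>A. s ^ d * F y A)"
  shows "clpartial F x x = (\<lambda>A. real d * F x A)"
proof (rule clpartial_eq[OF assms(1)])
  fix A
  have "(\<lambda>t. F (x + t *\<^sub>R x) A) = (\<lambda>t. (1 + t) ^ d * F x A)"
  proof
    fix t
    have "x + t *\<^sub>R x = (1 + t) *\<^sub>R x" by (simp add: algebra_simps)
    then show "F (x + t *\<^sub>R x) A = (1 + t) ^ d * F x A" using assms(2) by simp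
  qed
  moreover have "((\<lambda>t. (1 + t) ^ d * F x A) has_real_derivative real d * F x A) (at 0)"
    by (auto intro!: derivative_eq_intros)
  ultimately show "((\<lambda>t. F (x + t *\<^sub>R x) A) has_real_derivative real d * F x A) (at 0)" by simp
qed

definition clhasd :: "(real \<Rightarrow> 'm::{finite,linorder} cl) \<Rightarrow> 'm cl \<Rightarrow> real \<Rightarrow> bool" where
  "clhasd F D t \<longleftrightarrow> (\<forall>A. ((\<lambda>s. F s A) has_real_derivative D A) (at t))"

lemma clhasd_mul:
  assumes "clhasd F D t" "clhasd G E t"
  shows "clhasd (\<lambda>s. clmul (F s) (G s)) (\<lambda>C. clmul D (G t) C + clmul (F t) E C) t"
  unfolding clhasd_def
proof
  fix C
  have "((\<lambda>s. \<Sum>A\<in>UNIV. blade_sign A (sd A C) * F s A * G s (sd A C)) has_real_derivative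
     (\<Sum>A\<in>UNIV. blade_sign A (sd A C) * D A * G t (sd A C) + blade_sign A (sd A C) * F t A * E (sd A C))) (at t)"
    using assms unfolding clhasd_def
    by (auto intro!: derivative_eq_intros simp: algebra_simps)
  then show "((\<lambda>s. clmul (F s) (G s) C) has_real_derivative clmul D (G t) C + clmul (F t) E C) (at t)"
    unfolding clmul_alt by (simp add: sum.distrib)
qed



lemma rpf_const: "real_polynomial_function (\<lambda>x. c)"
  by (rule real_polynomial_function.intros(2))

lemma rpf_mult: "real_polynomial_function f \<Longrightarrow> real_polynomial_function g \<Longrightarrow> real_polynomial_function (\<lambda>x. f x * g x)"
  by (rule real_polynomial_function.intros(4))

lemma rpf_nth: "real_polynomial_function (\<lambda>x. x $ j)"
  by (rule real_polynomial_function.intros(1)) (rule bounded_linear_vec_nth)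

lemma cl_poly_const: "cl_poly (\<lambda>p. c)"
  unfolding cl_poly_def by (simp add: rpf_const)

lemma cl_poly_mul:
  assumes "cl_poly F" "cl_poly G"
  shows "cl_poly (\<lambda>p. clmul (F p) (G p))"
  using assms unfolding cl_poly_def clmul_alt
  by (intro allI real_polynomial_function_sum rpf_mult rpf_const) auto

lemma cl_poly_pow:
  assumes "cl_poly F" shows "cl_poly (\<lambda>p. clpow (F p) n)"
proof (induction n)
  case 0 show ?case by (simp add: cl_poly_const)
next
  case (Suc n) then show ?case by (simp add: cl_poly_mul assms)
qed

lemma cl_poly_clvec: "cl_poly (\<lambda>x::real^'m::{finite,linorder}. clvec x)"
proof -
  have e: "\<And>A (j::'m) (x::real^'m::{finite,linorder}). (if A = {j} then x $ j else 0) = (if A = {j} then 1 else 0) * x $ j" by simp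
  show ?thesis unfolding cl_poly_def clvec_def e
    by (intro allI real_polynomial_function_sum rpf_mult rpf_const rpf_nth) simp_all
qed

lemma cl_poly_compose:
  assumes "cl_poly F" "polynomial_function g"
  shows "cl_poly (\<lambda>p. F (g p))"
  using assms real_polynomial_function_compose[OF assms(2)] unfolding cl_poly_def o_def by blast

lemma cl_poly_P:
  assumes "cl_homogeneous_poly k (P :: real ^ 'm::{finite,linorder} \<Rightarrow> 'm cl)"
  shows "cl_poly P"
proof -
  obtain c :: "('m \<Rightarrow> nat) \<Rightarrow> 'm cl" where c: "\<And>x. P x = (\<lambda>A. \<Sum>\<alpha>\<in>{\<alpha>. sum \<alpha> UNIV = k}. c \<alpha> A * (\<Prod>i\<in>UNIV. (x $ i) ^ \<alpha> i))"
    using assms unfolding cl_homogeneous_poly_def by blast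
  show ?thesis unfolding cl_poly_def c
  proof
    fix A
    show "real_polynomial_function (\<lambda>p. \<Sum>\<alpha>\<in>{\<alpha>. sum \<alpha> UNIV = k}. c \<alpha> A * (\<Prod>i\<in>UNIV. (p $ i) ^ \<alpha> i))"
    proof (cases "finite {\<alpha>::'m \<Rightarrow> nat. sum \<alpha> UNIV = k}")
      case True then show ?thesis
        by (intro real_polynomial_function_sum real_polynomial_function_prod
            real_polynomial_function_power rpf_mult rpf_const rpf_nth finite_UNIV) simp_all
    qed (simp add: rpf_const)
  qed
qed

lemma P_homog:
  assumes "cl_homogeneous_poly k (P :: real ^ 'm::{finite,linorder} \<Rightarrow> 'm cl)"
  shows "P (s *\<^sub>R x) = (\<lambda>A. s ^ k * P x A)"
proof -
  obtain c :: "('m \<Rightarrow> nat) \<Rightarrow> 'm cl" where c: "\<And>x. P x = (\<lambda>A. \<Sum>\<alpha>\<in>{\<alpha>. sum \<alpha> UNIV = k}. c \<alpha> A * (\<Prod>i\<in>UNIV. (x $ i) ^ \<alpha> i))"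
    using assms unfolding cl_homogeneous_poly_def by blast
  show ?thesis unfolding c
  proof
    fix A
    have "(\<Sum>\<alpha>\<in>{\<alpha>. sum \<alpha> UNIV = k}. c \<alpha> A * (\<Prod>i\<in>UNIV. ((s *\<^sub>R x) $ i) ^ \<alpha> i))
        = (\<Sum>\<alpha>\<in>{\<alpha>. sum \<alpha> UNIV = k}. s ^ k * (c \<alpha> A * (\<Prod>i\<in>UNIV. (x $ i) ^ \<alpha> i)))"
    proof (rule sum.cong[OF refl])
      fix \<alpha> :: "'m \<Rightarrow> nat" assume "\<alpha> \<in> {\<alpha>. sum \<alpha> UNIV = k}"
      then have "s ^ k = (\<Prod>i\<in>UNIV. s ^ \<alpha> i)" by (simp add: power_sum[symmetric])
      then show "c \<alpha> A * (\<Prod>i\<in>UNIV. ((s *\<^sub>R x) $ i) ^ \<alpha> i) = s ^ k * (c \<alpha> A * (\<Prod>i\<in>UNIV. (x $ i) ^ \<alpha> i))"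
        by (simp add: power_mult_distrib prod.distrib)
    qed
    then show "(\<Sum>\<alpha>\<in>{\<alpha>. sum \<alpha> UNIV = k}. c \<alpha> A * (\<Prod>i\<in>UNIV. ((s *\<^sub>R x) $ i) ^ \<alpha> i))
        = s ^ k * (\<Sum>\<alpha>\<in>{\<alpha>. sum \<alpha> UNIV = k}. c \<alpha> A * (\<Prod>i\<in>UNIV. (x $ i) ^ \<alpha> i))"
      by (simp add: sum_distrib_left)
  qed
qed

lemma clvec_scale: "clvec (s *\<^sub>R x) = (\<lambda>A. s * clvec x A)"
proof -
  have "\<And>A j. (if A = {j} then (s *\<^sub>R x) $ j else 0) = s * (if A = {j} then x $ j else 0)" by simp
  then show ?thesis unfolding clvec_def by (simp add: sum_distrib_left)
qed

lemma clvec_add: "clvec (x + y) = (\<lambda>A. clvec x A + clvec y A)"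
proof -
  have "\<And>A j. (if A = {j} then (x + y) $ j else 0) = (if A = {j} then x $ j else 0) + (if A = {j} then y $ j else 0)" by simp
  then show ?thesis unfolding clvec_def by (simp add: sum.distrib)
qed

lemma clvec_axis: "clvec (axis i 1) = clbasis i"
proof -
  have e: "\<And>A j. (if A = {j} then axis i 1 $ j else 0) = (if j = i then (if A = {i} then 1 else 0) else 0)"
    by (simp add: axis_def)
  show ?thesis unfolding clvec_def clbasis_def e by (simp add: sum.delta sum.delta')
qed

lemma clpow_scale: "clpow (\<lambda>A. s * f A) n = (\<lambda>A. s ^ n * clpow f n A)"
proof (induction n)
  case 0 show ?case by (rule ext) (simp add: clone_def)
next
  case (Suc n) show ?case by (rule ext) (simp add: Suc clmul_scale_left clmul_scale_right)
qed

definition GG :: "(real ^ 'm::{finite,linorder} \<Rightarrow> 'm::{finite,linorder} cl) \<Rightarrow> nat \<Rightarrow> real ^ 'm::{finite,linorder} \<Rightarrow> 'm::{finite,linorder} cl" where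
  "GG P r x = clmul (clpow (clvec x) r) (P x)"

lemma GG_0: "GG P 0 x = P x" by (simp add: GG_def)

lemma GG_Suc: "GG P (Suc r) = (\<lambda>x. clmul (clvec x) (GG P r x))"
  by (rule ext) (simp add: GG_def clmul_assoc)

lemma GG_poly: "cl_poly P \<Longrightarrow> cl_poly (GG P r)"
  unfolding GG_def by (intro cl_poly_mul cl_poly_pow cl_poly_clvec) (simp add: cl_poly_def)

lemma GG_homog:
  assumes "cl_homogeneous_poly k P"
  shows "GG P r (s *\<^sub>R x) = (\<lambda>A. s ^ (r + k) * GG P r x A)"
  unfolding GG_def P_homog[OF assms] clvec_scale clpow_scale
  by (rule ext) (simp add: clmul_scale_left clmul_scale_right power_add)



lemma clpartial_vecmul:
  fixes F :: "real ^ 'm::{finite,linorder} \<Rightarrow> 'm cl"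
  assumes "cl_poly F"
  shows "clpartial (\<lambda>y. clmul (clvec y) (F y)) w x
       = (\<lambda>C. clmul (clvec w) (F x) C + clmul (clvec x) (clpartial F w x) C)"
proof (rule clpartial_eq)
  show "cl_poly (\<lambda>y. clmul (clvec y) (F y))" by (intro cl_poly_mul cl_poly_clvec assms)
  have h1: "clhasd (\<lambda>t. clvec (x + t *\<^sub>R w)) (clvec w) 0"
    unfolding clhasd_def clvec_add clvec_scale by (auto intro!: derivative_eq_intros)
  have h2: "clhasd (\<lambda>t. F (x + t *\<^sub>R w)) (clpartial F w x) 0"
    unfolding clhasd_def using line_deriv[OF assms] by blast
  fix A
  show "((\<lambda>t. clmul (clvec (x + t *\<^sub>R w)) (F (x + t *\<^sub>R w)) A) has_real_derivative
      clmul (clvec w) (F x) A + clmul (clvec x) (clpartial F w x) A) (at 0)"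
    using clhasd_mul[OF h1 h2] unfolding clhasd_def by simp
qed

lemma dirac_vecmul:
  fixes F :: "real ^ 'm::{finite,linorder} \<Rightarrow> 'm cl"
  assumes "cl_poly F" "\<And>s y. F (s *\<^sub>R y) = (\<lambda>A. s ^ d * F y A)"
  shows "dirac (\<lambda>y. clmul (clvec y) (F y)) x
     = (\<lambda>C. - real CARD('m) * F x C - clmul (clvec x) (dirac F x) C - 2 * real d * F x C)"
proof
  fix C
  let ?X = "clvec x" and ?dF = "\<lambda>i. clpartial F (axis i 1) x"
  have sq: "\<And>i::'m. clmul (clbasis i) (clmul (clbasis i) (F x)) C = - F x C"
  proof -
    fix i :: 'm
    have "clmul (clbasis i) (clbasis i) = (\<lambda>A. - clone A)" by (rule ext) (rule clmul_basis_sq)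
    then show "clmul (clbasis i) (clmul (clbasis i) (F x)) C = - F x C"
      by (simp add: clmul_assoc[symmetric] clmul_uminus_left)
  qed
  have an: "\<And>i::'m. clmul (clbasis i) (clmul ?X (?dF i)) C = - 2 * x $ i * ?dF i C - clmul ?X (clmul (clbasis i) (?dF i)) C"
  proof -
    fix i :: 'm
    have "clmul (clbasis i) ?X = (\<lambda>A. (- 2 * x $ i) * clone A - clmul ?X (clbasis i) A)"
      using clmul_basis_vec_anti[of i x] by (intro ext) (simp add: algebra_simps eq_diff_eq)
    then show "clmul (clbasis i) (clmul ?X (?dF i)) C = - 2 * x $ i * ?dF i C - clmul ?X (clmul (clbasis i) (?dF i)) C"
      by (simp add: clmul_assoc[symmetric] clmul_diff_left clmul_scale_left clmul_uminus_left)
  qed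
  have "dirac (\<lambda>y. clmul (clvec y) (F y)) x C
     = (\<Sum>i\<in>UNIV. clmul (clbasis i) (\<lambda>C. clmul (clbasis i) (F x) C + clmul ?X (?dF i) C) C)"
    unfolding dirac_def clpartial_vecmul[OF assms(1)] clvec_axis ..
  also have "\<dots> = (\<Sum>i\<in>UNIV. - F x C + (- 2 * x $ i * ?dF i C - clmul ?X (clmul (clbasis i) (?dF i)) C))"
    by (simp only: clmul_add_right sq an)
  also have "\<dots> = - real CARD('m) * F x C - 2 * (\<Sum>i\<in>UNIV. x $ i * ?dF i C) - (\<Sum>i\<in>UNIV. clmul ?X (clmul (clbasis i) (?dF i)) C)"
    by (simp add: sum.distrib sum_subtractf sum_distrib_left algebra_simps)
  also have "(\<Sum>i\<in>UNIV. x $ i * ?dF i C) = real d * F x C"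
    using clpartial_lin[OF assms(1)] euler[OF assms] by metis
  also have "(\<Sum>i\<in>UNIV. clmul ?X (clmul (clbasis i) (?dF i)) C) = clmul ?X (dirac F x) C"
    unfolding dirac_def clmul_sum_right ..
  finally show "dirac (\<lambda>y. clmul (clvec y) (F y)) x C = - real CARD('m) * F x C - clmul ?X (dirac F x) C - 2 * real d * F x C"
    by simp
qed



lemma beta_rec: "beta m k (Suc (Suc r)) = real m + 2 * (real (Suc r) + real k) - beta m k (Suc r)"
  by (cases "even r") (simp_all add: beta_def)

lemma clmul_scale_right2: "clmul h (\<lambda>A. f A * c) C = clmul h f C * c"
  using clmul_scale_right[of h c f C] by (simp add: mult.commute)

lemma dirac_P0:
  assumes "monogenic_Rm P" shows "dirac P x = (\<lambda>A. 0)"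
  using assms unfolding monogenic_Rm_def by blast

lemma dirac_GG:
  fixes P :: "real ^ 'm::{finite,linorder} \<Rightarrow> 'm cl"
  assumes hom: "cl_homogeneous_poly k P" and mono: "monogenic_Rm P"
  shows "dirac (GG P (Suc r)) x = (\<lambda>C. - beta CARD('m) k (Suc r) * GG P r x C)"
proof (induction r arbitrary: x)
  case 0
  have P: "cl_poly P" using cl_poly_P[OF hom] .
  have e: "GG P (Suc 0) = (\<lambda>y. clmul (clvec y) (P y))"
    unfolding GG_Suc GG_0 ..
  show ?case unfolding e dirac_vecmul[OF P P_homog[OF hom]] dirac_P0[OF mono]
    by (rule ext) (simp add: clmul_zero_right GG_0 beta_def algebra_simps)
next
  case (Suc r)
  have G: "cl_poly (GG P (Suc r))" using GG_poly[OF cl_poly_P[OF hom]] .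
  have H: "\<And>s y. GG P (Suc r) (s *\<^sub>R y) = (\<lambda>A. s ^ (Suc r + k) * GG P (Suc r) y A)"
    by (rule GG_homog[OF hom])
  have e: "GG P (Suc (Suc r)) = (\<lambda>y. clmul (clvec y) (GG P (Suc r) y))"
    by (rule GG_Suc)
  have e2: "clmul (clvec x) (GG P r x) = GG P (Suc r) x" by (simp add: GG_Suc)
  show ?case unfolding e dirac_vecmul[OF G H] Suc.IH
    by (rule ext) (simp add: clmul_scale_right clmul_scale_right2 clmul_uminus_right e2 beta_rec algebra_simps)
qed

definition acoef :: "nat \<Rightarrow> nat \<Rightarrow> nat \<Rightarrow> nat \<Rightarrow> real" where
  "acoef m k n j = real (n choose j) * Ccoef m k n j"

lemma Mpoly_eq:
  "Mpoly k P n p = (\<lambda>C. \<Sum>j\<in>{0..n}. acoef CARD('m) k n j * fst p ^ j * GG P (n - j) (snd p) C)"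
  for P :: "real ^ 'm::{finite,linorder} \<Rightarrow> 'm cl"
  unfolding Mpoly_def acoef_def GG_def
  by (rule ext) (simp add: clmul_sum_left clmul_scale_left)

lemma Mpoly_poly:
  fixes P :: "real ^ 'm::{finite,linorder} \<Rightarrow> 'm cl"
  assumes "cl_poly P"
  shows "cl_poly (Mpoly k P n)"
proof -
  have G: "\<And>r. cl_poly (\<lambda>p::real \<times> (real ^ 'm::{finite,linorder}). GG P r (snd p))"
    by (rule cl_poly_compose[OF GG_poly[OF assms]])
       (rule polynomial_function_bounded_linear[OF bounded_linear_snd])
  have f: "real_polynomial_function (\<lambda>p::real \<times> (real ^ 'm::{finite,linorder}). fst p)"
    by (rule real_polynomial_function.intros(1)) (rule bounded_linear_fst)
  show ?thesis unfolding cl_poly_def Mpoly_eq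
    using G unfolding cl_poly_def
    by (intro allI real_polynomial_function_sum rpf_mult rpf_const real_polynomial_function_power f) auto
qed

lemma partial_Mpoly_0:
  fixes P :: "real ^ 'm::{finite,linorder} \<Rightarrow> 'm cl"
  assumes "cl_poly P"
  shows "clpartial (Mpoly k P n) (1, 0) p
    = (\<lambda>C. \<Sum>j\<in>{0..n}. acoef CARD('m) k n j * (real j * fst p ^ (j - 1)) * GG P (n - j) (snd p) C)"
proof (rule clpartial_eq[OF Mpoly_poly[OF assms]])
  fix C
  show "((\<lambda>t. Mpoly k P n (p + t *\<^sub>R (1, 0)) C) has_real_derivative
     (\<Sum>j\<in>{0..n}. acoef CARD('m) k n j * (real j * fst p ^ (j - 1)) * GG P (n - j) (snd p) C)) (at 0)"
    unfolding Mpoly_eq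
    apply (auto intro!: derivative_eq_intros)
    by (intro sum.cong refl; simp add: mult_ac)
qed

lemma partial_Mpoly_x:
  fixes P :: "real ^ 'm::{finite,linorder} \<Rightarrow> 'm cl"
  assumes "cl_poly P"
  shows "clpartial (Mpoly k P n) (0, w) p
    = (\<lambda>C. \<Sum>j\<in>{0..n}. acoef CARD('m) k n j * fst p ^ j * clpartial (GG P (n - j)) w (snd p) C)"
proof (rule clpartial_eq[OF Mpoly_poly[OF assms]])
  fix C
  have "((\<lambda>t. GG P r (snd p + t *\<^sub>R w) C) has_real_derivative clpartial (GG P r) w (snd p) C) (at 0)" for r
    by (rule line_deriv[OF GG_poly[OF assms]])
  then show "((\<lambda>t. Mpoly k P n (p + t *\<^sub>R (0, w)) C) has_real_derivative
     (\<Sum>j\<in>{0..n}. acoef CARD('m) k n j * fst p ^ j * clpartial (GG P (n - j)) w (snd p) C)) (at 0)"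
    unfolding Mpoly_eq
    apply (auto intro!: derivative_eq_intros)
    by (intro sum.cong refl; simp add: mult_ac)
qed

lemma dirac_part_Mpoly:
  fixes P :: "real ^ 'm::{finite,linorder} \<Rightarrow> 'm cl"
  assumes "cl_poly P"
  shows "dirac_part (Mpoly k P n) p C
    = (\<Sum>j\<in>{0..n}. acoef CARD('m) k n j * fst p ^ j * dirac (GG P (n - j)) (snd p) C)"
  unfolding dirac_part_def partial_Mpoly_x[OF assms] dirac_def clmul_sum_right clmul_scale_right
  by (simp add: sum_distrib_left sum.swap[of _ UNIV])



lemma beta_pos: "0 < m \<Longrightarrow> 0 < beta m k s"
proof -
  assume m: "0 < m"
  show ?thesis
  proof (cases "s = 0")
    case True then show ?thesis by (simp add: beta_def)
  next
    case False
    then have "0 < 2 * k + m + s - 1" using m by linarith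
    then show ?thesis using False by (simp add: beta_def)
  qed
qed

lemma coef2:
  "acoef m k (Suc n) (Suc i) * real (Suc i) = real (Suc n) * acoef m k n i"
proof -
  have h: "real (Suc i) * real (Suc n choose Suc i) = real (Suc n) * real (n choose i)"
    by (metis of_nat_mult Suc_times_binomial)
  have "acoef m k (Suc n) (Suc i) * real (Suc i) = (real (Suc i) * real (Suc n choose Suc i)) * Ccoef m k n i"
    unfolding acoef_def Ccoef_def by (simp add: mult_ac)
  also have "\<dots> = real (Suc n) * acoef m k n i"
    unfolding h acoef_def by (simp add: mult_ac)
  finally show ?thesis .
qed

lemma coef1:
  assumes "0 < m" "i \<le> n"
  shows "acoef m k (Suc n) i * beta m k (Suc n - i) = real (Suc n) * acoef m k n i"
proof -
  let ?B = "\<lambda>r. \<Prod>s\<in>{0..r}. beta m k s"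
  have sn: "Suc n - i = Suc (n - i)" using assms by simp
  have B: "?B (Suc (n - i)) = ?B (n - i) * beta m k (Suc (n - i))"
    by (simp add: prod.atLeast0_atMost_Suc)
  have bnz: "beta m k (Suc (n - i)) \<noteq> 0" using beta_pos[OF assms(1)] by (metis less_irrefl)
  have h: "real (Suc (n - i)) * real (Suc n choose i) = real (Suc n) * real (n choose i)"
    using binomial_absorb_comp[of "Suc n" i] sn by (metis of_nat_mult diff_Suc_1)
  have "acoef m k (Suc n) i * beta m k (Suc n - i)
      = real (Suc n choose i) * (fact (Suc (n - i)) / (?B (n - i) * beta m k (Suc (n - i)))) * beta m k (Suc (n - i))"
    unfolding acoef_def Ccoef_def sn B ..
  also have "\<dots> = real (Suc n choose i) * (fact (Suc (n - i)) / ?B (n - i))"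
    using bnz by simp
  also have "\<dots> = (real (Suc (n - i)) * real (Suc n choose i)) * (fact (n - i) / ?B (n - i))"
    by (simp only: fact_Suc) (simp add: mult_ac)
  also have "\<dots> = real (Suc n) * acoef m k n i"
    unfolding h acoef_def Ccoef_def by (simp add: mult_ac)
  finally show ?thesis .
qed

lemma dirac_GG':
  fixes P :: "real ^ 'm::{finite,linorder} \<Rightarrow> 'm cl"
  assumes hom: "cl_homogeneous_poly k P" and mono: "monogenic_Rm P"
  shows "dirac (GG P r) x C = (if r = 0 then 0 else - beta CARD('m) k r * GG P (r - 1) x C)"
proof (cases r)
  case 0
  have "GG P 0 = P" by (rule ext) (simp add: GG_0)
  then show ?thesis using 0 dirac_P0[OF mono] by simp
next
  case (Suc r') then show ?thesis using dirac_GG[OF hom mono] by simp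
qed

lemma main_sums:
  fixes P :: "real ^ 'm::{finite,linorder} \<Rightarrow> 'm cl"
  fixes n :: nat and p :: "real \<times> (real ^ 'm::{finite,linorder})" and C :: "'m set"
  assumes hom: "cl_homogeneous_poly k P" and mono: "monogenic_Rm P"
  defines "T \<equiv> (\<Sum>i\<in>{0..n}. real (Suc n) * acoef CARD('m) k n i * fst p ^ i * GG P (n - i) (snd p) C)"
  shows "clpartial (Mpoly k P (Suc n)) (1, 0) p C = T"
    and "dirac_part (Mpoly k P (Suc n)) p C = - T"
proof -
  have P: "cl_poly P" by (rule cl_poly_P[OF hom])
  have m: "0 < CARD('m)" by simp
  let ?a = "acoef CARD('m) k"
  have "clpartial (Mpoly k P (Suc n)) (1, 0) p C
     = (\<Sum>j\<in>{0..Suc n}. ?a (Suc n) j * (real j * fst p ^ (j - 1)) * GG P (Suc n - j) (snd p) C)"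
    unfolding partial_Mpoly_0[OF P] ..
  also have "\<dots> = (\<Sum>i\<in>{0..n}. ?a (Suc n) (Suc i) * (real (Suc i) * fst p ^ i) * GG P (n - i) (snd p) C)"
    by (subst sum.atLeast0_atMost_Suc_shift) simp
  also have "\<dots> = T" unfolding T_def
  proof (intro sum.cong refl)
    fix i
    have c: "?a (Suc n) (Suc i) * real (Suc i) = real (Suc n) * ?a n i" by (rule coef2)
    have "?a (Suc n) (Suc i) * (real (Suc i) * fst p ^ i) * GG P (n - i) (snd p) C
        = (?a (Suc n) (Suc i) * real (Suc i)) * (fst p ^ i * GG P (n - i) (snd p) C)"
      by (simp only: mult.assoc)
    also have "\<dots> = (real (Suc n) * ?a n i) * (fst p ^ i * GG P (n - i) (snd p) C)"
      by (simp only: c)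
    finally show "?a (Suc n) (Suc i) * (real (Suc i) * fst p ^ i) * GG P (n - i) (snd p) C
        = real (Suc n) * ?a n i * fst p ^ i * GG P (n - i) (snd p) C"
      by (simp only: mult.assoc)
  qed
  finally show "clpartial (Mpoly k P (Suc n)) (1, 0) p C = T" .
  have "dirac_part (Mpoly k P (Suc n)) p C
     = (\<Sum>j\<in>{0..Suc n}. ?a (Suc n) j * fst p ^ j * dirac (GG P (Suc n - j)) (snd p) C)"
    unfolding dirac_part_Mpoly[OF P] ..
  also have "\<dots> = (\<Sum>j\<in>{0..n}. ?a (Suc n) j * fst p ^ j * dirac (GG P (Suc n - j)) (snd p) C)"
    by (simp add: sum.atLeast0_atMost_Suc dirac_GG'[OF hom mono])
  also have "\<dots> = (\<Sum>i\<in>{0..n}. - (real (Suc n) * ?a n i * fst p ^ i * GG P (n - i) (snd p) C))"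
  proof (intro sum.cong refl)
    fix i assume i: "i \<in> {0..n}"
    then have "?a (Suc n) i * beta CARD('m) k (Suc n - i) = real (Suc n) * ?a n i"
      using coef1[OF m] by simp
    moreover have "Suc n - i - 1 = n - i" using i by simp
    ultimately show "?a (Suc n) i * fst p ^ i * dirac (GG P (Suc n - i)) (snd p) C
        = - (real (Suc n) * ?a n i * fst p ^ i * GG P (n - i) (snd p) C)"
      using i by (simp add: dirac_GG'[OF hom mono] mult_ac)
  qed
  also have "\<dots> = - T" unfolding T_def by (simp add: sum_negf)
  finally show "dirac_part (Mpoly k P (Suc n)) p C = - T" .
qed

theorem mainTheorem1:
  fixes k :: nat and P :: "real ^ 'm::{finite,linorder} \<Rightarrow> 'm cl"
  assumes "cl_homogeneous_poly k P"
    and "monogenic_Rm P"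
  shows "(\<forall>p. Mpoly k P 0 p = P (snd p))
    \<and> (\<forall>n. (\<forall>A. polynomial_function (\<lambda>p. Mpoly k P n p A)) \<and> monogenic_Rm1 (Mpoly k P n))
    \<and> (\<forall>n\<ge>1. \<forall>p A. (1/2) * conj_cauchy_riemann (Mpoly k P n) p A = real n * Mpoly k P (n - 1) p A)"
proof (intro conjI allI impI)
  have P: "cl_poly P" by (rule cl_poly_P[OF assms(1)])
  fix p :: "real \<times> (real ^ 'm::{finite,linorder})"
  show "Mpoly k P 0 p = P (snd p)"
    unfolding Mpoly_eq by (rule ext) (simp add: acoef_def Ccoef_def beta_def GG_0)
next
  have P: "cl_poly P" by (rule cl_poly_P[OF assms(1)])
  fix n A
  show "polynomial_function (\<lambda>p. Mpoly k P n p A)"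
    using Mpoly_poly[OF P, of k n] unfolding cl_poly_def real_polynomial_function_eq by blast
next
  have P: "cl_poly P" by (rule cl_poly_P[OF assms(1)])
  fix n
  show "monogenic_Rm1 (Mpoly k P n)"
    unfolding monogenic_Rm1_def
  proof (intro conjI allI)
    show "cl_C1 (Mpoly k P n)" by (rule cl_poly_C1[OF Mpoly_poly[OF P]])
    fix p
    show "cauchy_riemann (Mpoly k P n) p = (\<lambda>A. 0)"
    proof (rule ext)
      fix C
      show "cauchy_riemann (Mpoly k P n) p C = 0"
      proof (cases n)
        case 0
        then show ?thesis unfolding cauchy_riemann_def partial_Mpoly_0[OF P] dirac_part_Mpoly[OF P]
          by (simp add: dirac_GG'[OF assms])
      next
        case (Suc n')
        then show ?thesis unfolding cauchy_riemann_def using main_sums[OF assms, of n' p C] by simp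
      qed
    qed
  qed
next
  fix n :: nat and p A
  assume "1 \<le> n"
  then obtain n' where n: "n = Suc n'" by (metis Suc_le_D One_nat_def)
  have P: "cl_poly P" by (rule cl_poly_P[OF assms(1)])
  show "(1/2) * conj_cauchy_riemann (Mpoly k P n) p A = real n * Mpoly k P (n - 1) p A"
    unfolding conj_cauchy_riemann_def n using main_sums[OF assms, of n' p A]
    by (simp add: Mpoly_eq sum_distrib_left mult_ac)
qed

end
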